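(* Let $\mathcal G=(\mathcal V,\mathcal E)$ be a finite undirected graph, and let $\mathcal V_c\subseteq\mathcal V$ and $\mathcal V_a=\mathcal V\setminus\mathcal V_c$. Let $u$ be the mixed network coordination/anti-coordination game with set of coordinating players $\mathcal V_c$ and set of anti-coordinating players $\mathcal V_a$, i.e. each player $i\in\mathcal V$ has action set $\{-1,+1\}$ and utility $$u_i(x)=\xi_i\sum_{j\in\mathcal N_i}x_ix_j,\qquad \xi_i=+1\text{ if } i\in\mathcal V_c,\ \xi_i=-1\text{ if } i\in\mathcal V_a.$$ If $\mathcal V_c$ is cohesive in $\mathcal G$, then $u$ admits a pure strategy Nash equilibrium (in fact at least two).
   Context: $\mathcal N_i=\{j\in\mathcal V:\{i,j\}\in\mathcal E\}$ is the neighborhood of $i$. A pure strategy Nash equilibrium is a profile $x^*\in\{-1,+1\}^{\mathcal V}$ such that $u_i(x^* )\ge u_i(y)$ for every player $i$ and every profile $y$ differing from $x^*$ only in entry $i$. A subset $\mathcal R\subseteq\mathcal V$ is cohesive in $\mathcal G$ if, with $\mathcal S=\mathcal V\setminus\mathcal R$, every $i\in\mathcal R$ satisfies $|\mathcal N_i\cap\mathcal R|\ge|\mathcal N_i\cap\mathcal S|$. *)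

theory Defs
  imports Main "HOL-Library.FuncSet"
begin

definition undirected_graph :: "'a set \<Rightarrow> 'a set set \<Rightarrow> bool" where
  "undirected_graph V E \<longleftrightarrow> finite V \<and>
     (\<forall>e\<in>E. \<exists>a b. a \<in> V \<and> b \<in> V \<and> a \<noteq> b \<and> e = {a, b})"

definition neighborhood :: "'a set \<Rightarrow> 'a set set \<Rightarrow> 'a \<Rightarrow> 'a set" where
  "neighborhood V E i = {j \<in> V. {i, j} \<in> E}"

definition cohesive :: "'a set \<Rightarrow> 'a set set \<Rightarrow> 'a set \<Rightarrow> bool" where
  "cohesive V E R \<longleftrightarrow> R \<subseteq> V \<and>
     (\<forall>i\<in>R. card (neighborhood V E i \<inter> R) \<ge> card (neighborhood V E i \<inter> (V - R)))"

definition profiles :: "'a set \<Rightarrow> ('a \<Rightarrow> int) set" where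
  "profiles V = V \<rightarrow>\<^sub>E {-1, 1}"

definition xi :: "'a set \<Rightarrow> 'a \<Rightarrow> int" where
  "xi Vc i = (if i \<in> Vc then 1 else -1)"

definition mixed_utility :: "'a set \<Rightarrow> 'a set set \<Rightarrow> 'a set \<Rightarrow> 'a \<Rightarrow> ('a \<Rightarrow> int) \<Rightarrow> int" where
  "mixed_utility V E Vc i x = xi Vc i * (\<Sum>j\<in>neighborhood V E i. x i * x j)"

definition pure_nash :: "'a set \<Rightarrow> ('a \<Rightarrow> ('a \<Rightarrow> int) \<Rightarrow> int) \<Rightarrow> ('a \<Rightarrow> int) \<Rightarrow> bool" where
  "pure_nash V u x \<longleftrightarrow> x \<in> profiles V \<and>
     (\<forall>i\<in>V. \<forall>y\<in>profiles V. (\<forall>j\<in>V. j \<noteq> i \<longrightarrow> y j = x j) \<longrightarrow> u i x \<ge> u i y)"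

end

theory Submission
  imports Defs
begin

lemma nb_sub: "neighborhood V E i \<subseteq> V"
  by (auto simp: neighborhood_def)

lemma nb_fin: "undirected_graph V E \<Longrightarrow> finite (neighborhood V E i)"
  using nb_sub finite_subset unfolding undirected_graph_def by metis

lemma nb_irr: "undirected_graph V E \<Longrightarrow> i \<notin> neighborhood V E i"
  unfolding undirected_graph_def neighborhood_def
  by (metis (no_types, lifting) doubleton_eq_iff insert_absorb2 mem_Collect_eq)

lemma nb_sym: "j \<in> neighborhood V E i \<Longrightarrow> i \<in> V \<Longrightarrow> i \<in> neighborhood V E j"
  unfolding neighborhood_def by (auto simp: insert_commute)

lemma prof_val: "x \<in> profiles V \<Longrightarrow> i \<in> V \<Longrightarrow> x i = 1 \<or> x i = -1"
  unfolding profiles_def by auto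

lemma prof_out: "x \<in> profiles V \<Longrightarrow> i \<notin> V \<Longrightarrow> x i = undefined"
  unfolding profiles_def by auto

lemma dev_cases:
  assumes "x \<in> profiles V" "y \<in> profiles V" "i \<in> V" "\<forall>j\<in>V. j \<noteq> i \<longrightarrow> y j = x j"
  shows "y = x \<or> y i = - x i"
proof (cases "y i = x i")
  case True
  have "y j = x j" for j
    using assms True prof_out[of x V j] prof_out[of y V j] by (cases "j \<in> V") auto
  then show ?thesis by auto
next
  case False
  then show ?thesis using prof_val[OF assms(1,3)] prof_val[OF assms(2,3)] by auto
qed

lemma flip_util:
  assumes G: "undirected_graph V E" and "i \<in> V" "y i = - x i" "\<forall>j\<in>V. j \<noteq> i \<longrightarrow> y j = x j"
  shows "mixed_utility V E Vc i y = - mixed_utility V E Vc i x"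
proof -
  have "(\<Sum>j\<in>neighborhood V E i. y i * y j) = (\<Sum>j\<in>neighborhood V E i. - (x i * x j))"
    apply (rule sum.cong[OF refl])
    using assms nb_irr[OF G, of i] nb_sub[of V E i] by auto
  then show ?thesis unfolding mixed_utility_def by (simp add: sum_negf)
qed

lemma nash_from_nonneg:
  assumes G: "undirected_graph V E" and x: "x \<in> profiles V"
    and nn: "\<And>i. i \<in> V \<Longrightarrow> mixed_utility V E Vc i x \<ge> 0"
  shows "pure_nash V (mixed_utility V E Vc) x"
  unfolding pure_nash_def
proof (intro conjI x ballI impI)
  fix i y assume i: "i \<in> V" and y: "y \<in> profiles V" and ag: "\<forall>j\<in>V. j \<noteq> i \<longrightarrow> y j = x j"
  from dev_cases[OF x y i ag] show "mixed_utility V E Vc i y \<le> mixed_utility V E Vc i x"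
  proof
    assume "y i = - x i"
    then show ?thesis using flip_util[OF G i _ ag] nn[OF i] by simp
  qed simp
qed

lemma neg_nash:
  assumes "pure_nash V (mixed_utility V E Vc) x"
  shows "pure_nash V (mixed_utility V E Vc) (restrict (\<lambda>i. - x i) V)"
proof -
  let ?n = "\<lambda>x. restrict (\<lambda>i. - x i) V"
  have x: "x \<in> profiles V" using assms unfolding pure_nash_def by auto
  have negp: "?n z \<in> profiles V" if "z \<in> profiles V" for z
    using that unfolding profiles_def by auto
  have ut: "mixed_utility V E Vc i (?n z) = mixed_utility V E Vc i z" if "i \<in> V" for i z
    unfolding mixed_utility_def
    apply (rule arg_cong[where f="\<lambda>s. xi Vc i * s"])
    apply (rule sum.cong[OF refl])
    using that nb_sub[of V E i] by auto
  have nn: "?n (?n z) = z" if "z \<in> profiles V" for z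
    using that prof_out[OF that] by (auto simp: restrict_def)
  show ?thesis unfolding pure_nash_def
  proof (intro conjI negp[OF x] ballI impI)
    fix i y assume i: "i \<in> V" and y: "y \<in> profiles V" and ag: "\<forall>j\<in>V. j \<noteq> i \<longrightarrow> y j = ?n x j"
    have "\<forall>j\<in>V. j \<noteq> i \<longrightarrow> ?n y j = x j" using ag by auto
    then have "mixed_utility V E Vc i (?n y) \<le> mixed_utility V E Vc i x"
      using assms negp[OF y] i unfolding pure_nash_def by blast
    then show "mixed_utility V E Vc i y \<le> mixed_utility V E Vc i (?n x)"
      using ut[OF i] by simp
  qed
qed

theorem corollary1:
  fixes V :: "'a set" and E :: "'a set set" and Vc :: "'a set"
  assumes "undirected_graph V E"
    and "V \<noteq> {}"
    and "Vc \<subseteq> V"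
    and "cohesive V E Vc"
  shows "\<exists>x y. x \<noteq> y \<and> pure_nash V (mixed_utility V E Vc) x \<and> pure_nash V (mixed_utility V E Vc) y"
proof -
  note G = assms(1)
  have finV: "finite V" using G unfolding undirected_graph_def by auto
  let ?N = "neighborhood V E"
  define W where "W x = (\<Sum>a\<in>V. \<Sum>b\<in>?N a. if a \<in> Vc \<and> b \<in> Vc then 0 else x a * x b)" for x :: "'a \<Rightarrow> int"
  define S where "S = {x \<in> profiles V. \<forall>i\<in>Vc. x i = 1}"
  have finS: "finite S" unfolding S_def profiles_def using finV by (simp add: finite_PiE)
  have "restrict (\<lambda>_. 1) V \<in> S" unfolding S_def profiles_def using assms(3) by auto
  then have neS: "S \<noteq> {}" by auto
  obtain x where xS: "x \<in> S" and xmin: "\<And>y. y \<in> S \<Longrightarrow> W x \<le> W y"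
  proof -
    have "Min (W ` S) \<in> W ` S" using finS neS by simp
    then obtain x where "x \<in> S" "W x = Min (W ` S)" by auto
    then show ?thesis using that finS by (metis Min_le finite_imageI imageI)
  qed
  have x: "x \<in> profiles V" and x1: "\<And>i. i \<in> Vc \<Longrightarrow> x i = 1" using xS unfolding S_def by auto
  have nn: "mixed_utility V E Vc k x \<ge> 0" if k: "k \<in> V" for k
  proof (cases "k \<in> Vc")
    case True
    have e1: "(\<Sum>j\<in>?N k. x j) = (\<Sum>j\<in>?N k \<inter> Vc. x j) + (\<Sum>j\<in>?N k - Vc. x j)"
      using nb_fin[OF G] by (metis sum.Int_Diff)
    have e2: "(\<Sum>j\<in>?N k \<inter> Vc. x j) = int (card (?N k \<inter> Vc))"
      using x1 by simp
    have e3: "(\<Sum>j\<in>?N k - Vc. x j) \<ge> (\<Sum>j\<in>?N k - Vc. -1)"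
      apply (rule sum_mono) using prof_val[OF x] nb_sub[of V E k] by fastforce
    have "(\<Sum>j\<in>?N k. x j) \<ge> int (card (?N k \<inter> Vc)) - int (card (?N k - Vc))"
      using e1 e2 e3 by simp
    moreover have "?N k - Vc = ?N k \<inter> (V - Vc)" using nb_sub[of V E k] by auto
    ultimately have "(\<Sum>j\<in>?N k. x j) \<ge> 0" using assms(4) True unfolding cohesive_def by fastforce
    then show ?thesis unfolding mixed_utility_def xi_def using True x1[OF True]
      by simp
  next
    case False
    define y where "y = x(k := - x k)"
    have "- x k \<in> {-1, 1}" using prof_val[OF x k] by auto
    then have "y \<in> profiles V" using x k unfolding y_def profiles_def by (simp add: PiE_iff extensional_def)
    then have y: "y \<in> S" using x1 False unfolding S_def y_def by auto
    have tmq: "(if a \<in> Vc \<and> b \<in> Vc then 0 else y a * y b) - (if a \<in> Vc \<and> b \<in> Vc then 0 else x a * x b)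
       = (if a = k then -2 * x k * x b else 0) + (if b = k then -2 * x a * x k else 0)"
      if "a \<in> V" "b \<in> ?N a" for a b
      using that nb_irr[OF G, of a] False by (auto simp: y_def)
    have "W y - W x = (\<Sum>a\<in>V. \<Sum>b\<in>?N a. (if a = k then -2 * x k * x b else 0) + (if b = k then -2 * x a * x k else 0))"
      unfolding W_def sum_subtractf[symmetric]
      by (rule sum.cong[OF refl], rule sum.cong[OF refl], rule tmq)
    also have "\<dots> = (\<Sum>a\<in>V. \<Sum>b\<in>?N a. (if a = k then -2 * x k * x b else 0)) + (\<Sum>a\<in>V. \<Sum>b\<in>?N a. (if b = k then -2 * x a * x k else 0))"
      by (simp add: sum.distrib)
    also have "(\<Sum>a\<in>V. \<Sum>b\<in>?N a. (if a = k then -2 * x k * x b else 0)) = (\<Sum>b\<in>?N k. -2 * x k * x b)"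
    proof -
      have "(\<Sum>a\<in>V. \<Sum>b\<in>?N a. (if a = k then -2 * x k * x b else 0)) = (\<Sum>a\<in>V. if a = k then (\<Sum>b\<in>?N k. -2 * x k * x b) else 0)"
        by (rule sum.cong[OF refl]) auto
      then show ?thesis using finV k by (simp add: sum.delta')
    qed
    also have "(\<Sum>a\<in>V. \<Sum>b\<in>?N a. (if b = k then -2 * x a * x k else 0)) = (\<Sum>a\<in>V. if k \<in> ?N a then -2 * x a * x k else 0)"
      using nb_fin[OF G] by (simp add: sum.delta')
    also have "\<dots> = (\<Sum>a\<in>?N k. -2 * x a * x k)"
    proof -
      have "{a \<in> V. k \<in> ?N a} = ?N k"
      proof (intro equalityI subsetI)
        fix a assume "a \<in> {a \<in> V. k \<in> ?N a}"
        then show "a \<in> ?N k" using nb_sym[of k V E a] by simp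
      next
        fix a assume a: "a \<in> ?N k"
        then have "a \<in> V" using nb_sub[of V E k] by auto
        then show "a \<in> {a \<in> V. k \<in> ?N a}" using nb_sym[OF a k] by simp
      qed
      then show ?thesis using finV by (simp add: sum.If_cases Int_def)
    qed
    finally have "W y - W x = -4 * (\<Sum>b\<in>?N k. x k * x b)"
      by (simp add: sum_distrib_left algebra_simps)
    moreover have "W x \<le> W y" using xmin[OF y] .
    ultimately show ?thesis unfolding mixed_utility_def xi_def using False by simp
  qed
  have N1: "pure_nash V (mixed_utility V E Vc) x" using nash_from_nonneg[OF G x] nn by auto
  note N2 = neg_nash[OF N1]
  obtain v where v: "v \<in> V" using assms(2) by auto
  have "restrict (\<lambda>i. - x i) V \<noteq> x"
  proof
    assume "restrict (\<lambda>i. - x i) V = x"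
    then have "- x v = x v" using v by (metis restrict_apply')
    then show False using prof_val[OF x v] by auto
  qed
  then show ?thesis using N1 N2 by blast
qed

end
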